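(* Let $k\ge1$ and let $\alpha_1\ge\alpha_2\ge\dots\ge\alpha_k$ be real numbers in $[0,1]$ with $\alpha_1+\dots+\alpha_k=1$ (where $\alpha_2:=0$ if $k=1$). Let $0\le\delta\le\frac1{16}$. Then at least one of the following holds: (A) $\alpha_1\ge\frac13+\frac23\delta$; (B) $\alpha_1+\alpha_2\ge\frac12+\delta$; (C) there is a non-empty subset $I\subseteq\{1,\dots,k\}$ with $2\delta\le\sum_{i\in I}\alpha_i\le\frac13-\frac43\delta$. *)

theory Defs
  imports Main Complex_Main
begin

end

theory Submission
  imports Defs
begin

theorem lemma6p2:
  fixes k :: nat and \<alpha> :: "nat \<Rightarrow> real" and \<delta> :: real
  assumes "k \<ge> 1"
    and "\<And>i. i \<in> {1..k} \<Longrightarrow> 0 \<le> \<alpha> i \<and> \<alpha> i \<le> 1"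
    and "\<And>i j. i \<in> {1..k} \<Longrightarrow> j \<in> {1..k} \<Longrightarrow> i \<le> j \<Longrightarrow> \<alpha> j \<le> \<alpha> i"
    and "(\<Sum>i=1..k. \<alpha> i) = 1"
    and "0 \<le> \<delta>" and "\<delta> \<le> 1/16"
  shows "\<alpha> 1 \<ge> 1/3 + 2/3 * \<delta>
     \<or> \<alpha> 1 + (if k \<ge> 2 then \<alpha> 2 else 0) \<ge> 1/2 + \<delta>
     \<or> (\<exists>I. I \<noteq> {} \<and> I \<subseteq> {1..k} \<and> 2 * \<delta> \<le> (\<Sum>i\<in>I. \<alpha> i)
            \<and> (\<Sum>i\<in>I. \<alpha> i) \<le> 1/3 - 4/3 * \<delta>)"
proof -
  note nn = assms(2) and mono = assms(3)
  define T where "T m = (\<Sum>i=m..k. \<alpha> i)" for m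
  define S where "S = {m. 1 \<le> m \<and> m \<le> k \<and> 2*\<delta> \<le> T m}"
  have "1 \<in> S" using assms unfolding S_def T_def by auto
  have finS: "finite S" unfolding S_def by auto
  define m where "m = Max S"
  have mS: "m \<in> S" using finS \<open>1 \<in> S\<close> m_def Max_in by blast
  hence m1: "1 \<le> m" and mk: "m \<le> k" and Tm: "2*\<delta> \<le> T m" unfolding S_def by auto
  have Tnext: "T (Suc m) \<le> 2*\<delta>"
  proof (cases "Suc m \<le> k")
    case True
    have "Suc m \<notin> S" using Max_ge[OF finS, of "Suc m"] unfolding m_def[symmetric] by linarith
    then show ?thesis using True unfolding S_def by auto
  next
    case False
    then have "{Suc m..k} = {}" by auto
    then show ?thesis unfolding T_def using assms(5) by simp
  qed
  have Tsplit: "T m = \<alpha> m + T (Suc m)" unfolding T_def using mk by (simp add: sum.atLeast_Suc_atMost)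
  have Tnn: "0 \<le> T (Suc m)" unfolding T_def using nn by (intro sum_nonneg) auto
  show ?thesis
  proof (cases "\<alpha> m \<le> 1/3 - 10/3*\<delta>")
    case True
    have "{m..k} \<noteq> {} \<and> {m..k} \<subseteq> {1..k}" using m1 mk by auto
    moreover have "2*\<delta> \<le> T m \<and> T m \<le> 1/3 - 4/3*\<delta>" using Tm Tsplit Tnext True by linarith
    ultimately show ?thesis unfolding T_def by blast
  next
    case False
    show ?thesis
    proof (cases "\<alpha> m \<le> 1/3 - 4/3*\<delta>")
      case True
      have "2*\<delta> \<le> \<alpha> m" using False assms(6) by linarith
      then have "{m} \<noteq> {} \<and> {m} \<subseteq> {1..k} \<and> 2*\<delta> \<le> (\<Sum>i\<in>{m}. \<alpha> i) \<and> (\<Sum>i\<in>{m}. \<alpha> i) \<le> 1/3 - 4/3*\<delta>"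
        using True m1 mk by auto
      then show ?thesis by blast
    next
      case big: False
      have bigi: "\<alpha> i > 1/4" if "1 \<le> i" "i \<le> m" for i
        using mono[of i m] that m1 mk big assms(6) by auto
      have "m \<le> 3"
      proof (rule ccontr)
        assume "\<not> m \<le> 3"
        hence "{1..4} \<subseteq> {1..k}" using mk by auto
        hence "(\<Sum>i=1..4. \<alpha> i) \<le> (\<Sum>i=1..k. \<alpha> i)"
          using nn by (intro sum_mono2) auto
        moreover have "(\<Sum>i=1..4::nat. \<alpha> i) = \<alpha> 1 + \<alpha> 2 + \<alpha> 3 + \<alpha> 4"
          by (simp add: eval_nat_numeral)
        moreover have "\<alpha> 1 > 1/4" "\<alpha> 2 > 1/4" "\<alpha> 3 > 1/4" "\<alpha> 4 > 1/4"
          using bigi \<open>\<not> m \<le> 3\<close> by auto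
        ultimately show False using assms(4) by linarith
      qed
      have T1: "T 1 = 1" using assms(4) unfolding T_def by simp
      have T12: "T 1 = \<alpha> 1 + T 2" unfolding T_def using assms(1)
        by (simp add: sum.atLeast_Suc_atMost eval_nat_numeral)
      have T23: "k \<ge> 2 \<Longrightarrow> T 2 = \<alpha> 2 + T 3" unfolding T_def
        by (simp add: sum.atLeast_Suc_atMost eval_nat_numeral)
      have m123: "m = 1 \<or> m = 2 \<or> m = 3" using m1 \<open>m \<le> 3\<close> by auto
      moreover {
        assume "m = 1"
        hence "T 2 \<le> 2*\<delta>" using Tnext by (simp add: eval_nat_numeral)
        hence ?thesis using T1 T12 assms(6) by linarith
      }
      moreover {
        assume "m = 2"
        hence "T 3 \<le> 2*\<delta>" "k \<ge> 2" using Tnext mk by (simp_all add: eval_nat_numeral)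
        hence ?thesis using T1 T12 T23 assms(5,6) by auto
      }
      moreover {
        assume m3: "m = 3"
        have a32: "\<alpha> 3 \<le> \<alpha> 2" "\<alpha> 2 \<le> \<alpha> 1" using mono[of 2 3] mono[of 1 2] m3 mk by auto
        have "T 3 = \<alpha> 3 + T 4" using Tsplit m3 by (simp add: eval_nat_numeral)
        moreover have "T 4 \<le> 2*\<delta>" "k \<ge> 2" using Tnext mk m3 by (simp_all add: eval_nat_numeral)
        ultimately have ?thesis using T1 T12 T23 a32 assms(5,6) by auto
      }
      ultimately show ?thesis by blast
    qed
  qed
qed

end
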